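(* Let $L$ be a finite-dimensional non-nilpotent Lie algebra over a field $F$, and suppose $U$ is a nonzero proper strongly self-centralizing subalgebra of $L$. Then: (1) $\mathrm{nil}_L(x)=U$ for all $0\neq x\in U$; (2) $\Gamma_{\mathfrak{N}}(L)$ is disconnected; (3) if $F$ is finite, then $|N(L)|-1\le\omega(\Gamma_{\mathfrak{N}}(L))$.
   Context: A subalgebra $U$ of $L$ is strongly self-centralizing if $C_L(x)=U$ for all $0\neq x\in U$, where $C_L(x)=\{y\in L\mid [x,y]=0\}$. $\langle a,b\rangle$ denotes the Lie subalgebra generated by $a,b$; $\mathrm{nil}_L(h)=\{x\in L\mid \langle h,x\rangle \text{ is nilpotent}\}$ and $\mathrm{nil}(L)=\{x\in L\mid \langle h,x\rangle \text{ is nilpotent for all } h\in L\}$. The nilpotent graph $\Gamma_{\mathfrak{N}}(L)$ is the simple undirected graph with vertex set $L\setminus\mathrm{nil}(L)$ in which distinct vertices $x,y$ are adjacent iff $\langle x,y\rangle$ is nilpotent. $\omega(\Gamma)$ is the clique number of $\Gamma$, and $N(L)$ is the nilradical (largest nilpotent ideal) of $L$. *)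

theory Defs
  imports Complex_Main
begin

text \<open>A Lie algebra is modelled as the whole carrier type 'v, a vector space over the
field 'k (scalar multiplication sc), with Lie bracket br.\<close>

definition lie_algebra :: "('k::field \<Rightarrow> 'v::ab_group_add \<Rightarrow> 'v) \<Rightarrow> ('v \<Rightarrow> 'v \<Rightarrow> 'v) \<Rightarrow> bool" where
  "lie_algebra sc br \<longleftrightarrow> vector_space sc \<and>
     (\<forall>x y z. br (x + y) z = br x z + br y z) \<and>
     (\<forall>x y z. br x (y + z) = br x y + br x z) \<and>
     (\<forall>c x y. br (sc c x) y = sc c (br x y)) \<and>
     (\<forall>c x y. br x (sc c y) = sc c (br x y)) \<and>
     (\<forall>x. br x x = 0) \<and>
     (\<forall>x y z. br x (br y z) + br y (br z x) + br z (br x y) = 0)"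

definition fin_dim :: "('k::field \<Rightarrow> 'v::ab_group_add \<Rightarrow> 'v) \<Rightarrow> bool" where
  "fin_dim sc \<longleftrightarrow> (\<exists>B. finite B \<and> module.span sc B = UNIV)"

definition lie_subalgebra :: "('k::field \<Rightarrow> 'v::ab_group_add \<Rightarrow> 'v) \<Rightarrow> ('v \<Rightarrow> 'v \<Rightarrow> 'v) \<Rightarrow> 'v set \<Rightarrow> bool" where
  "lie_subalgebra sc br S \<longleftrightarrow> module.subspace sc S \<and> (\<forall>x\<in>S. \<forall>y\<in>S. br x y \<in> S)"

definition lie_ideal :: "('k::field \<Rightarrow> 'v::ab_group_add \<Rightarrow> 'v) \<Rightarrow> ('v \<Rightarrow> 'v \<Rightarrow> 'v) \<Rightarrow> 'v set \<Rightarrow> bool" where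
  "lie_ideal sc br I \<longleftrightarrow> module.subspace sc I \<and> (\<forall>x. \<forall>y\<in>I. br x y \<in> I)"

fun lcs :: "('k::field \<Rightarrow> 'v::ab_group_add \<Rightarrow> 'v) \<Rightarrow> ('v \<Rightarrow> 'v \<Rightarrow> 'v) \<Rightarrow> 'v set \<Rightarrow> nat \<Rightarrow> 'v set" where
  "lcs sc br S 0 = S"
| "lcs sc br S (Suc n) = module.span sc {br x y | x y. x \<in> S \<and> y \<in> lcs sc br S n}"

definition lie_nilpotent :: "('k::field \<Rightarrow> 'v::ab_group_add \<Rightarrow> 'v) \<Rightarrow> ('v \<Rightarrow> 'v \<Rightarrow> 'v) \<Rightarrow> 'v set \<Rightarrow> bool" where
  "lie_nilpotent sc br S \<longleftrightarrow> (\<exists>n. lcs sc br S n = {0})"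

definition gen :: "('k::field \<Rightarrow> 'v::ab_group_add \<Rightarrow> 'v) \<Rightarrow> ('v \<Rightarrow> 'v \<Rightarrow> 'v) \<Rightarrow> 'v set \<Rightarrow> 'v set" where
  "gen sc br A = \<Inter>{S. lie_subalgebra sc br S \<and> A \<subseteq> S}"

definition centralizer :: "('v::ab_group_add \<Rightarrow> 'v \<Rightarrow> 'v) \<Rightarrow> 'v \<Rightarrow> 'v set" where
  "centralizer br x = {y. br x y = 0}"

definition strongly_self_centralizing :: "('k::field \<Rightarrow> 'v::ab_group_add \<Rightarrow> 'v) \<Rightarrow> ('v \<Rightarrow> 'v \<Rightarrow> 'v) \<Rightarrow> 'v set \<Rightarrow> bool" where
  "strongly_self_centralizing sc br U \<longleftrightarrow> lie_subalgebra sc br U \<and>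
     (\<forall>x\<in>U. x \<noteq> 0 \<longrightarrow> centralizer br x = U)"

definition nil_of :: "('k::field \<Rightarrow> 'v::ab_group_add \<Rightarrow> 'v) \<Rightarrow> ('v \<Rightarrow> 'v \<Rightarrow> 'v) \<Rightarrow> 'v \<Rightarrow> 'v set" where
  "nil_of sc br h = {x. lie_nilpotent sc br (gen sc br {h, x})}"

definition nil_all :: "('k::field \<Rightarrow> 'v::ab_group_add \<Rightarrow> 'v) \<Rightarrow> ('v \<Rightarrow> 'v \<Rightarrow> 'v) \<Rightarrow> 'v set" where
  "nil_all sc br = {x. \<forall>h. lie_nilpotent sc br (gen sc br {h, x})}"

definition ng_vertices :: "('k::field \<Rightarrow> 'v::ab_group_add \<Rightarrow> 'v) \<Rightarrow> ('v \<Rightarrow> 'v \<Rightarrow> 'v) \<Rightarrow> 'v set" where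
  "ng_vertices sc br = UNIV - nil_all sc br"

definition ng_adj :: "('k::field \<Rightarrow> 'v::ab_group_add \<Rightarrow> 'v) \<Rightarrow> ('v \<Rightarrow> 'v \<Rightarrow> 'v) \<Rightarrow> 'v \<Rightarrow> 'v \<Rightarrow> bool" where
  "ng_adj sc br x y \<longleftrightarrow> x \<in> ng_vertices sc br \<and> y \<in> ng_vertices sc br \<and> x \<noteq> y \<and>
     lie_nilpotent sc br (gen sc br {x, y})"

definition ng_connected :: "('k::field \<Rightarrow> 'v::ab_group_add \<Rightarrow> 'v) \<Rightarrow> ('v \<Rightarrow> 'v \<Rightarrow> 'v) \<Rightarrow> bool" where
  "ng_connected sc br \<longleftrightarrow>
     (\<forall>x\<in>ng_vertices sc br. \<forall>y\<in>ng_vertices sc br. (ng_adj sc br)\<^sup>*\<^sup>* x y)"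

definition ng_clique :: "('k::field \<Rightarrow> 'v::ab_group_add \<Rightarrow> 'v) \<Rightarrow> ('v \<Rightarrow> 'v \<Rightarrow> 'v) \<Rightarrow> 'v set \<Rightarrow> bool" where
  "ng_clique sc br C \<longleftrightarrow> C \<subseteq> ng_vertices sc br \<and>
     (\<forall>x\<in>C. \<forall>y\<in>C. x \<noteq> y \<longrightarrow> ng_adj sc br x y)"

text \<open>Clique number (meaningful for finite graphs, which is the case it is used in).\<close>
definition ng_clique_number :: "('k::field \<Rightarrow> 'v::ab_group_add \<Rightarrow> 'v) \<Rightarrow> ('v \<Rightarrow> 'v \<Rightarrow> 'v) \<Rightarrow> nat" where
  "ng_clique_number sc br = Sup {card C | C. finite C \<and> ng_clique sc br C}"

definition nilradical :: "('k::field \<Rightarrow> 'v::ab_group_add \<Rightarrow> 'v) \<Rightarrow> ('v \<Rightarrow> 'v \<Rightarrow> 'v) \<Rightarrow> 'v set" where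
  "nilradical sc br = (THE N. lie_ideal sc br N \<and> lie_nilpotent sc br N \<and>
     (\<forall>I. lie_ideal sc br I \<and> lie_nilpotent sc br I \<longrightarrow> I \<subseteq> N))"

end

theory Submission
  imports Defs "HOL-Library.FuncSet"
begin

locale lieA = vector_space sc for sc :: "'k::field \<Rightarrow> 'v::ab_group_add \<Rightarrow> 'v" +
  fixes br :: "'v \<Rightarrow> 'v \<Rightarrow> 'v"
  assumes addL: "br (x + y) z = br x z + br y z"
    and addR: "br x (y + z) = br x y + br x z"
    and scL: "br (sc c x) y = sc c (br x y)"
    and scR: "br x (sc c y) = sc c (br x y)"
    and alt: "br x x = 0"
    and jac: "br x (br y z) + br y (br z x) + br z (br x y) = 0"
begin

lemma zeroL[simp]: "br 0 y = 0"
  using addL[of 0 0 y] by simp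
lemma zeroR[simp]: "br x 0 = 0"
  using addR[of x 0 0] by simp
lemma anti: "br y x = - br x y"
proof -
  have "br x x + br x y + (br y x + br y y) = 0" using alt[of "x+y"] by (simp add: addL addR add.assoc add.left_commute)
  hence "br x y + br y x = 0" by (simp add: alt)
  thus ?thesis by (rule minus_unique[symmetric])
qed
lemma negL: "br (- x) y = - br x y"
  using addL[of x "-x" y] by (intro minus_unique[symmetric]) simp
lemma negR: "br x (- y) = - br x y"
  using addR[of x y "-y"] by (intro minus_unique[symmetric]) simp

lemma jac2: "br x (br a y) = br (br x a) y + br a (br x y)"
proof -
  have "br x (br a y) + br a (br y x) + br y (br x a) = 0" by (rule jac)
  moreover have "br a (br y x) = - br a (br x y)" by (simp add: anti[of y x] negR)
  moreover have "br y (br x a) = - br (br x a) y" by (rule anti)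
  ultimately show ?thesis by (simp add: algebra_simps eq_neg_iff_add_eq_0)
qed

lemma subspace_pre: "subspace T \<Longrightarrow> subspace {z. br a z \<in> T}"
  unfolding subspace_def by (auto simp: addR scR)

lemma br_span: assumes "subspace T" "\<And>z. z \<in> X \<Longrightarrow> br a z \<in> T" "z \<in> span X"
  shows "br a z \<in> T"
proof -
  have "span X \<subseteq> {z. br a z \<in> T}"
    by (rule span_minimal) (use assms subspace_pre in auto)
  thus ?thesis using assms(3) by auto
qed

lemma lcs_zero: "0 \<in> S \<Longrightarrow> 0 \<in> lcs sc br S k"
  by (cases k) (auto simp: span_zero)

lemma lcs_mono_set: "S \<subseteq> T \<Longrightarrow> lcs sc br S k \<subseteq> lcs sc br T k"
proof (induction k)
  case 0 then show ?case by simp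
next
  case (Suc k) then show ?case by (simp, intro span_mono) blast
qed

lemma ideal_sub: "lie_ideal sc br I \<Longrightarrow> subspace I"
  by (simp add: lie_ideal_def)

lemma lcs_ideal: assumes I: "lie_ideal sc br I" shows "lie_ideal sc br (lcs sc br I k)"
proof (induction k)
  case 0 then show ?case using I by simp
next
  case (Suc k)
  let ?G = "{br x y | x y. x \<in> I \<and> y \<in> lcs sc br I k}"
  have "br x z \<in> span ?G" if z: "z \<in> span ?G" for x z
  proof (rule br_span[OF subspace_span _ z])
    fix g assume "g \<in> ?G"
    then obtain a y where g: "g = br a y" "a \<in> I" "y \<in> lcs sc br I k" by blast
    have 1: "br (br x a) y \<in> span ?G"
      using g I by (intro span_base) (auto simp: lie_ideal_def)
    have 2: "br a (br x y) \<in> span ?G"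
      using g Suc by (intro span_base) (auto simp: lie_ideal_def)
    show "br x g \<in> span ?G" unfolding g(1) jac2[of x a y] by (rule span_add[OF 1 2])
  qed
  then show ?case by (simp add: lie_ideal_def)
qed

lemma lcs_dec: assumes I: "lie_ideal sc br I"
  shows "lcs sc br I (Suc k) \<subseteq> lcs sc br I k"
proof -
  have "span {br x y | x y. x \<in> I \<and> y \<in> lcs sc br I k} \<subseteq> lcs sc br I k"
    using lcs_ideal[OF I, of k] by (intro span_minimal) (auto simp: lie_ideal_def)
  thus ?thesis by simp
qed

lemma lcs_dec_le: assumes I: "lie_ideal sc br I" and "m \<le> k"
  shows "lcs sc br I k \<subseteq> lcs sc br I m"
  using assms(2)
proof (induction k)
  case 0 then show ?case by simp
next
  case (Suc k) then show ?case using lcs_dec[OF I, of k] by (cases "m = Suc k") auto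
qed

lemma lcs_zero_after: assumes I: "lie_ideal sc br I" "lcs sc br I m = {0}" "m \<le> k"
  shows "lcs sc br I k = {0}"
  using lcs_dec_le[OF I(1) I(3)] I(2) lcs_zero[of I k] subspace_0[OF ideal_sub[OF I(1)]] by auto

definition E :: "'v set \<Rightarrow> nat \<Rightarrow> 'v set" where
  "E I p = (if p = 0 then UNIV else lcs sc br I (p - 1))"

lemma E_ideal: assumes "lie_ideal sc br I" shows "lie_ideal sc br (E I p)"
proof (cases "p = 0")
  case True then show ?thesis by (simp add: E_def lie_ideal_def)
next
  case False then show ?thesis using lcs_ideal[OF assms] by (simp add: E_def)
qed

lemma E_step: assumes I: "lie_ideal sc br I" and a: "a \<in> I" and z: "z \<in> E I p"
  shows "br a z \<in> E I (Suc p)"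
proof (cases p)
  case 0
  have "br z a \<in> I" using I a by (simp add: lie_ideal_def)
  hence "- br z a \<in> I" using subspace_neg ideal_sub[OF I] by blast
  then show ?thesis using 0 by (simp add: E_def anti[of a z])
next
  case (Suc q)
  then show ?thesis using a z by (auto simp: E_def intro!: span_base)
qed

definition T :: "'v set \<Rightarrow> 'v set \<Rightarrow> nat \<Rightarrow> 'v set" where
  "T I J k = span (\<Union>p\<in>{..Suc k}. E I p \<inter> E J (Suc k - p))"

lemma sum_claim:
  assumes I: "lie_ideal sc br I" and J: "lie_ideal sc br J"
  shows "lcs sc br {a + b | a b. a \<in> I \<and> b \<in> J} k \<subseteq> T I J k"
proof (induction k)
  case 0
  show ?case
  proof
    fix s assume "s \<in> lcs sc br {a + b | a b. a \<in> I \<and> b \<in> J} 0"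
    then obtain a b where s: "s = a + b" "a \<in> I" "b \<in> J" by auto
    have "a \<in> E I 1 \<inter> E J (Suc 0 - 1)" using s by (simp add: E_def)
    hence "a \<in> T I J 0" unfolding T_def by (intro span_base UN_I[of 1]) auto
    moreover have "b \<in> E I 0 \<inter> E J (Suc 0 - 0)" using s by (simp add: E_def)
    hence "b \<in> T I J 0" unfolding T_def by (intro span_base UN_I[of 0]) auto
    ultimately show "s \<in> T I J 0" using s by (simp add: T_def span_add)
  qed
next
  case (Suc k)
  let ?S = "{a + b | a b. a \<in> I \<and> b \<in> J}"
  let ?X = "\<Union>p\<in>{..Suc k}. E I p \<inter> E J (Suc k - p)"
  let ?Y = "\<Union>p\<in>{..Suc (Suc k)}. E I p \<inter> E J (Suc (Suc k) - p)"
  have gen: "br x y \<in> T I J (Suc k)" if x: "x \<in> ?S" and y: "y \<in> lcs sc br ?S k" for x y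
  proof -
    obtain a b where ab: "x = a + b" "a \<in> I" "b \<in> J" using x by auto
    have yX: "y \<in> span ?X" using Suc y by (auto simp: T_def)
    have A: "br a y \<in> T I J (Suc k)" unfolding T_def
    proof (rule br_span[OF subspace_span _ yX])
      fix z assume "z \<in> ?X"
      then obtain p where p: "p \<le> Suc k" "z \<in> E I p" "z \<in> E J (Suc k - p)" by auto
      have "br a z \<in> E I (Suc p)" using E_step[OF I ab(2) p(2)] .
      moreover have "br a z \<in> E J (Suc k - p)" using E_ideal[OF J] p(3) by (simp add: lie_ideal_def)
      moreover have "Suc (Suc k) - Suc p = Suc k - p" by simp
      ultimately have "br a z \<in> ?Y" using p(1) by (intro UN_I[of "Suc p"]) auto
      thus "br a z \<in> span ?Y" by (rule span_base)
    qed
    have B: "br b y \<in> T I J (Suc k)" unfolding T_def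
    proof (rule br_span[OF subspace_span _ yX])
      fix z assume "z \<in> ?X"
      then obtain p where p: "p \<le> Suc k" "z \<in> E I p" "z \<in> E J (Suc k - p)" by auto
      have "br b z \<in> E J (Suc (Suc k - p))" using E_step[OF J ab(3) p(3)] .
      moreover have "br b z \<in> E I p" using E_ideal[OF I] p(2) by (simp add: lie_ideal_def)
      moreover have "Suc (Suc k) - p = Suc (Suc k - p)" using p(1) by simp
      ultimately have "br b z \<in> ?Y" using p(1) by (intro UN_I[of p]) auto
      thus "br b z \<in> span ?Y" by (rule span_base)
    qed
    show ?thesis using A B ab by (simp add: addL T_def span_add)
  qed
  have "lcs sc br ?S (Suc k) \<subseteq> T I J (Suc k)"
    unfolding lcs.simps T_def by (rule span_minimal) (use gen in \<open>auto simp: T_def\<close>)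
  thus ?case .
qed

lemma sum_nilpotent:
  assumes I: "lie_ideal sc br I" and J: "lie_ideal sc br J"
    and nI: "lie_nilpotent sc br I" and nJ: "lie_nilpotent sc br J"
  shows "lie_nilpotent sc br {a + b | a b. a \<in> I \<and> b \<in> J}"
proof -
  obtain m where m: "lcs sc br I m = {0}" using nI by (auto simp: lie_nilpotent_def)
  obtain n where n: "lcs sc br J n = {0}" using nJ by (auto simp: lie_nilpotent_def)
  let ?S = "{a + b | a b. a \<in> I \<and> b \<in> J}"
  have "(\<Union>p\<in>{..Suc (m+n)}. E I p \<inter> E J (Suc (m+n) - p)) \<subseteq> {0}"
  proof safe
    fix p z assume p: "p \<le> Suc (m+n)" "z \<in> E I p" "z \<in> E J (Suc (m+n) - p)"
    show "z = 0"
    proof (cases "p \<ge> Suc m")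
      case True
      then have "E I p = {0}" using lcs_zero_after[OF I m, of "p - 1"] by (simp add: E_def)
      then show ?thesis using p by auto
    next
      case False
      then have "E J (Suc (m+n) - p) = {0}" using lcs_zero_after[OF J n, of "Suc (m+n) - p - 1"]
        by (simp add: E_def)
      then show ?thesis using p by auto
    qed
  qed
  hence "T I J (m+n) \<subseteq> {0}" unfolding T_def
    by (metis span_minimal subspace_single_0)
  hence "lcs sc br ?S (m+n) \<subseteq> {0}" using sum_claim[OF I J] by blast
  moreover have "0 \<in> ?S" using subspace_0[OF ideal_sub[OF I]] subspace_0[OF ideal_sub[OF J]] by force
  ultimately have "lcs sc br ?S (m+n) = {0}" using lcs_zero[of ?S "m+n"] by blast
  thus ?thesis by (auto simp: lie_nilpotent_def)
qed

lemma sum_ideal: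
  assumes I: "lie_ideal sc br I" and J: "lie_ideal sc br J"
  shows "lie_ideal sc br {a + b | a b. a \<in> I \<and> b \<in> J}"
proof -
  have sI: "subspace I" and sJ: "subspace J" using I J by (auto simp: lie_ideal_def)
  have "subspace {a + b | a b. a \<in> I \<and> b \<in> J}"
  proof (rule subspaceI)
    show "0 \<in> {a + b | a b. a \<in> I \<and> b \<in> J}" using subspace_0[OF sI] subspace_0[OF sJ] by force
  next
    fix x y assume "x \<in> {a + b | a b. a \<in> I \<and> b \<in> J}" "y \<in> {a + b | a b. a \<in> I \<and> b \<in> J}"
    then obtain a b a' b' where "x = a + b" "y = a' + b'" "a \<in> I" "b \<in> J" "a' \<in> I" "b' \<in> J" by auto
    then show "x + y \<in> {a + b | a b. a \<in> I \<and> b \<in> J}"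
      by (intro CollectI exI[of _ "a + a'"] exI[of _ "b + b'"])
        (auto simp: algebra_simps intro: subspace_add[OF sI] subspace_add[OF sJ])
  next
    fix c x assume "x \<in> {a + b | a b. a \<in> I \<and> b \<in> J}"
    then obtain a b where "x = a + b" "a \<in> I" "b \<in> J" by auto
    then show "sc c x \<in> {a + b | a b. a \<in> I \<and> b \<in> J}"
      by (intro CollectI exI[of _ "sc c a"] exI[of _ "sc c b"])
        (auto simp: scale_right_distrib intro: subspace_scale[OF sI] subspace_scale[OF sJ])
  qed
  moreover have "br x y \<in> {a + b | a b. a \<in> I \<and> b \<in> J}" if yy: "y \<in> {a + b | a b. a \<in> I \<and> b \<in> J}" for x y
  proof -
    obtain a b where "y = a + b" "a \<in> I" "b \<in> J" using yy by auto
    then show ?thesis using I J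
      by (intro CollectI exI[of _ "br x a"] exI[of _ "br x b"]) (auto simp: addR lie_ideal_def)
  qed
  ultimately show ?thesis by (auto simp: lie_ideal_def)
qed


lemma gen_sub: "lie_subalgebra sc br S \<Longrightarrow> A \<subseteq> S \<Longrightarrow> gen sc br A \<subseteq> S"
  unfolding gen_def by blast

lemma gen_sup: "A \<subseteq> gen sc br A"
  unfolding gen_def by blast

lemma gen_zero: "0 \<in> gen sc br A"
  unfolding gen_def lie_subalgebra_def using subspace_0 by blast

lemma nilp_sub: assumes "B \<subseteq> S" "0 \<in> B" "lcs sc br S n = {0}" shows "lie_nilpotent sc br B"
proof -
  have "lcs sc br B n \<subseteq> {0}" using lcs_mono_set[OF assms(1), of n] assms(3) by simp
  hence "lcs sc br B n = {0}" using lcs_zero[OF assms(2), of n] by blast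
  thus ?thesis by (auto simp: lie_nilpotent_def)
qed

lemma ssc_abelian: assumes "strongly_self_centralizing sc br U" "a \<in> U" "b \<in> U"
  shows "br a b = 0"
proof (cases "a = 0")
  case False then have "centralizer br a = U" using assms by (auto simp: strongly_self_centralizing_def)
  then show ?thesis using assms(3) by (auto simp: centralizer_def)
qed simp

lemma part1: assumes ssc: "strongly_self_centralizing sc br U" and x: "x \<in> U" "x \<noteq> 0"
  shows "nil_of sc br x = U"
proof
  have subU: "lie_subalgebra sc br U" using ssc by (simp add: strongly_self_centralizing_def)
  have U0: "0 \<in> U" using subU subspace_0 by (auto simp: lie_subalgebra_def)
  show "U \<subseteq> nil_of sc br x"
  proof
    fix y assume y: "y \<in> U"
    have "{br a b | a b. a \<in> U \<and> b \<in> lcs sc br U 0} \<subseteq> {0}" using ssc_abelian[OF ssc] by auto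
    hence "lcs sc br U (Suc 0) \<subseteq> {0}" by (simp add: span_minimal)
    hence "lcs sc br U (Suc 0) = {0}" using span_zero by auto
    moreover have "gen sc br {x, y} \<subseteq> U" using gen_sub[OF subU] x y by auto
    ultimately have "lie_nilpotent sc br (gen sc br {x, y})" using nilp_sub gen_zero by blast
    thus "y \<in> nil_of sc br x" by (simp add: nil_of_def)
  qed
  show "nil_of sc br x \<subseteq> U"
  proof
    fix y assume "y \<in> nil_of sc br x"
    then obtain n0 where n0: "lcs sc br (gen sc br {x, y}) n0 = {0}"
      by (auto simp: nil_of_def lie_nilpotent_def)
    let ?N = "gen sc br {x, y}"
    define n where "n = (LEAST n. lcs sc br ?N n = {0})"
    have n: "lcs sc br ?N n = {0}" unfolding n_def using n0 by (rule LeastI)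
    have xN: "x \<in> ?N" and yN: "y \<in> ?N" using gen_sup[of "{x, y}"] by auto
    have "n \<noteq> 0"
    proof
      assume "n = 0"
      hence "?N = {0}" using n by (simp only: lcs.simps(1))
      thus False using xN x(2) by blast
    qed
    then obtain m where m: "n = Suc m" by (cases n) auto
    have "lcs sc br ?N m \<noteq> {0}" using not_less_Least[of m "\<lambda>n. lcs sc br ?N n = {0}"] m n_def by auto
    moreover have "0 \<in> lcs sc br ?N m" using lcs_zero gen_zero by blast
    ultimately obtain z where z: "z \<in> lcs sc br ?N m" "z \<noteq> 0" by blast
    have "br x z \<in> lcs sc br ?N (Suc m)" using xN z by (auto intro!: span_base)
    hence "br x z = 0" using n m by auto
    hence zU: "z \<in> U" using ssc x by (auto simp: strongly_self_centralizing_def centralizer_def)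
    have "br y z \<in> lcs sc br ?N (Suc m)" using yN z by (auto intro!: span_base)
    hence "br y z = 0" using n m by auto
    hence "br z y = 0" using anti[of z y] by simp
    thus "y \<in> U" using ssc zU z(2) by (auto simp: strongly_self_centralizing_def centralizer_def)
  qed
qed

lemma nil_all_sub: assumes ssc: "strongly_self_centralizing sc br U" and "U \<noteq> {0}" "U \<noteq> UNIV"
  shows "nil_all sc br \<subseteq> {0}"
proof
  have subU: "lie_subalgebra sc br U" using ssc by (simp add: strongly_self_centralizing_def)
  have U0: "0 \<in> U" using subU subspace_0 by (auto simp: lie_subalgebra_def)
  obtain u where u: "u \<in> U" "u \<noteq> 0" using assms U0 by blast
  fix v assume v: "v \<in> nil_all sc br"
  have "v \<in> nil_of sc br u" using v by (simp add: nil_all_def nil_of_def insert_commute)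
  hence vU: "v \<in> U" using part1[OF ssc u] by simp
  show "v \<in> {0}"
  proof (rule ccontr)
    assume "v \<notin> {0}"
    hence "nil_of sc br v = U" using part1[OF ssc vU] by simp
    moreover have "nil_of sc br v = UNIV" using v by (auto simp: nil_all_def nil_of_def insert_commute)
    ultimately show False using assms(3) by simp
  qed
qed

lemma zero_nil_all: "0 \<in> nil_all sc br"
proof -
  have "lie_nilpotent sc br (gen sc br {h, 0})" for h
  proof -
    let ?S = "span {h}"
    have ab: "br a b = 0" if "a \<in> ?S" "b \<in> ?S" for a b
      using that by (auto simp: span_singleton scL scR alt)
    have sub: "lie_subalgebra sc br ?S" using ab span_zero by (auto simp: lie_subalgebra_def)
    have "{br a b | a b. a \<in> ?S \<and> b \<in> lcs sc br ?S 0} \<subseteq> {0}" using ab by auto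
    hence "lcs sc br ?S (Suc 0) \<subseteq> {0}" by (simp add: span_minimal)
    hence "lcs sc br ?S (Suc 0) = {0}" using span_zero by auto
    moreover have "gen sc br {h, 0} \<subseteq> ?S" using gen_sub[OF sub] span_base span_zero by auto
    ultimately show ?thesis using nilp_sub gen_zero by blast
  qed
  thus ?thesis by (simp add: nil_all_def)
qed

lemma part2: assumes ssc: "strongly_self_centralizing sc br U" and "U \<noteq> {0}" "U \<noteq> UNIV"
  shows "\<not> ng_connected sc br"
proof
  assume conn: "ng_connected sc br"
  have na: "nil_all sc br \<subseteq> {0}" using nil_all_sub assms by blast
  have subU: "lie_subalgebra sc br U" using ssc by (simp add: strongly_self_centralizing_def)
  have U0: "0 \<in> U" using subU subspace_0 by (auto simp: lie_subalgebra_def)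
  obtain u where u: "u \<in> U" "u \<noteq> 0" using assms U0 by blast
  obtain v where v: "v \<notin> U" using assms by blast
  have "u \<in> ng_vertices sc br" "v \<in> ng_vertices sc br" using na u v U0
    by (auto simp: ng_vertices_def)
  hence path: "(ng_adj sc br)\<^sup>*\<^sup>* u v" using conn by (auto simp: ng_connected_def)
  have "w \<in> U" if "(ng_adj sc br)\<^sup>*\<^sup>* u w" for w
    using that
  proof (induction rule: rtranclp_induct)
    case base then show ?case using u by simp
  next
    case (step w w')
    have "w \<noteq> 0" using step(2) zero_nil_all
      by (auto simp: ng_adj_def ng_vertices_def nil_all_def)
    moreover have "w' \<in> nil_of sc br w" using step(2) by (simp add: ng_adj_def nil_of_def)
    ultimately show ?case using part1[OF ssc step(3)] by simp
  qed
  thus False using path v by blast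
qed

lemma finite_v: assumes "fin_dim sc" "finite (UNIV :: 'k set)" shows "finite (UNIV :: 'v set)"
proof -
  obtain B where B: "finite B" "span B = UNIV" using assms(1) by (auto simp: fin_dim_def)
  let ?f = "\<lambda>u. \<Sum>v\<in>B. sc (u v) v"
  have sub: "range ?f \<subseteq> ?f ` (B \<rightarrow>\<^sub>E UNIV)"
  proof
    fix w assume "w \<in> range ?f"
    then obtain u where w: "w = ?f u" by auto
    have "?f (restrict u B) = ?f u" by (intro sum.cong) auto
    thus "w \<in> ?f ` (B \<rightarrow>\<^sub>E UNIV)" using w by (intro image_eqI[of _ _ "restrict u B"]) auto
  qed
  have fi: "finite (?f ` (B \<rightarrow>\<^sub>E UNIV))" using B(1) assms(2) by (intro finite_imageI finite_PiE) auto
  have U: "(UNIV::'v set) = range ?f" using B(2) span_finite[OF B(1)] by simp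
  show ?thesis unfolding U by (rule finite_subset[OF sub fi])
qed


lemma part3: assumes ssc: "strongly_self_centralizing sc br U" and "U \<noteq> {0}" "U \<noteq> UNIV"
  and fin: "finite (UNIV :: 'v set)"
  shows "card (nilradical sc br) - 1 \<le> ng_clique_number sc br"
proof -
  let ?Q = "{N. lie_ideal sc br N \<and> lie_nilpotent sc br N}"
  have finQ: "finite ?Q" using fin by (metis finite_Pow_iff Pow_UNIV finite_subset subset_UNIV)
  have "{0} \<in> ?Q" by (auto simp: lie_ideal_def lie_nilpotent_def intro!: exI[of _ 0])
  hence "Max (card ` ?Q) \<in> card ` ?Q" using finQ by (intro Max_in) auto
  then obtain N0 where N0: "N0 \<in> ?Q" "card N0 = Max (card ` ?Q)" by auto
  have maxN0: "card N \<le> card N0" if "N \<in> ?Q" for N using N0 finQ that by simp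
  have big: "I \<subseteq> N0" if I: "I \<in> ?Q" for I
  proof -
    let ?S = "{a + b | a b. a \<in> N0 \<and> b \<in> I}"
    have SQ: "?S \<in> ?Q" using sum_ideal sum_nilpotent N0 I by auto
    have z0: "0 \<in> N0" "0 \<in> I" using N0 I subspace_0 ideal_sub by auto
    have h1: "N0 \<subseteq> ?S" using z0 by force
    have h2: "card ?S \<le> card N0" using maxN0 SQ by blast
    have finS: "finite ?S" using fin by (rule finite_subset[rotated]) simp
    have "N0 = ?S" by (rule card_seteq[OF finS h1 h2])
    moreover have "I \<subseteq> ?S" using z0 by force
    ultimately show ?thesis by simp
  qed
  have nr: "nilradical sc br = N0" unfolding nilradical_def
  proof (rule the_equality)
    show "lie_ideal sc br N0 \<and> lie_nilpotent sc br N0 \<and>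
      (\<forall>I. lie_ideal sc br I \<and> lie_nilpotent sc br I \<longrightarrow> I \<subseteq> N0)" using N0 big by auto
  next
    fix N assume "lie_ideal sc br N \<and> lie_nilpotent sc br N \<and>
      (\<forall>I. lie_ideal sc br I \<and> lie_nilpotent sc br I \<longrightarrow> I \<subseteq> N)"
    then show "N = N0" using N0 big by blast
  qed
  have na: "nil_all sc br \<subseteq> {0}" using nil_all_sub assms by blast
  let ?C = "N0 - {0}"
  obtain n where n: "lcs sc br N0 n = {0}" using N0 by (auto simp: lie_nilpotent_def)
  have subN0: "lie_subalgebra sc br N0" using N0 by (auto simp: lie_ideal_def lie_subalgebra_def)
  have cv: "?C \<subseteq> ng_vertices sc br" using na by (auto simp: ng_vertices_def)
  have ca: "ng_adj sc br x y" if xy: "x \<in> ?C" "y \<in> ?C" "x \<noteq> y" for x y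
  proof -
    have "gen sc br {x, y} \<subseteq> N0" using gen_sub[OF subN0] xy by auto
    hence "lie_nilpotent sc br (gen sc br {x, y})" using nilp_sub gen_zero n by blast
    thus "ng_adj sc br x y" using xy cv by (auto simp: ng_adj_def)
  qed
  have cl: "ng_clique sc br ?C" unfolding ng_clique_def using cv ca by blast
  have "0 \<in> N0" using N0 subspace_0 ideal_sub by auto
  hence cardC: "card ?C = card N0 - 1" using fin by (simp add: finite_subset)
  let ?X = "{card C | C. finite C \<and> ng_clique sc br C}"
  have "?X \<subseteq> {..card (UNIV :: 'v set)}" using fin by (auto intro: card_mono)
  hence "finite ?X" by (rule finite_subset) simp
  moreover have "card ?C \<in> ?X" using cl fin by (auto intro: finite_subset)
  ultimately have "card ?C \<le> Sup ?X" by (rule le_cSup_finite)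
  thus ?thesis using cardC nr by (simp add: ng_clique_number_def)
qed

end

lemma lieA_of: "lie_algebra sc br \<Longrightarrow> lieA sc br"
  unfolding lie_algebra_def lieA_def lieA_axioms_def by auto

theorem theorem6p6:
  fixes sc :: "'k::field \<Rightarrow> 'v::ab_group_add \<Rightarrow> 'v"
    and br :: "'v \<Rightarrow> 'v \<Rightarrow> 'v"
    and U :: "'v set"
  assumes "lie_algebra sc br"
    and "fin_dim sc"
    and "\<not> lie_nilpotent sc br UNIV"
    and "strongly_self_centralizing sc br U"
    and "U \<noteq> {0}"
    and "U \<noteq> UNIV"
  shows "(\<forall>x\<in>U. x \<noteq> 0 \<longrightarrow> nil_of sc br x = U)
    \<and> \<not> ng_connected sc br
    \<and> (finite (UNIV :: 'k set) \<longrightarrow> card (nilradical sc br) - 1 \<le> ng_clique_number sc br)"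
proof -
  interpret L: lieA sc br using lieA_of[OF assms(1)] .
  show ?thesis
    using L.part1[OF assms(4)] L.part2[OF assms(4-6)] L.part3[OF assms(4-6) L.finite_v[OF assms(2)]]
    by blast
qed

end
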